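(* Let $P$ be a finite $\vee$-semilattice, $K\subseteq P$ any subset, and $A\in\mathbb{R}$. Then $\kappa:P\to\mathbb{R}$, $\kappa(x)=A-|\{k\in K: x\le k\}|$, is an isotone upper valuation on $P$.
   Context: For a poset $(P,\le)$ and $x\in P$: $\downarrow x=\{x'\in P: x'\le x\}$, $\uparrow x=\{x'\in P: x\le x'\}$. A function $f:P\to\mathbb{R}$ is isotone if $x\le y\Rightarrow f(x)\le f(y)$. For an isotone $f$ and $x,y\in P$ define $f^-(x,y)=\sup\{f(z):z\in\downarrow x\cap\downarrow y\}$ and $f^+(x,y)=\inf\{f(z):z\in\uparrow x\cap\uparrow y\}$, with $\inf\emptyset=+\infty$, $\sup\emptyset=-\infty$. An isotone $v:P\to\mathbb{R}$ is an upper valuation if $\uparrow x\cap\uparrow y\neq\emptyset$ for all $x,y\in P$ and $v^-(x,y)+v^+(x,y)\le v(x)+v(y)$ for all $x,y\in P$. *)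

theory Defs
  imports Main "HOL-Library.Extended_Real"
begin

definition isotone :: "('a::order \<Rightarrow> real) \<Rightarrow> bool" where
  "isotone f \<longleftrightarrow> (\<forall>x y. x \<le> y \<longrightarrow> f x \<le> f y)"

text \<open>f^-(x,y) = sup of f over the common lower bounds (sup of empty set = -infinity).\<close>
definition fminus :: "('a::order \<Rightarrow> real) \<Rightarrow> 'a \<Rightarrow> 'a \<Rightarrow> ereal" where
  "fminus f x y = Sup ((\<lambda>z. ereal (f z)) ` {z. z \<le> x \<and> z \<le> y})"

text \<open>f^+(x,y) = inf of f over the common upper bounds (inf of empty set = +infinity).\<close>
definition fplus :: "('a::order \<Rightarrow> real) \<Rightarrow> 'a \<Rightarrow> 'a \<Rightarrow> ereal" where
  "fplus f x y = Inf ((\<lambda>z. ereal (f z)) ` {z. x \<le> z \<and> y \<le> z})"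

definition upper_valuation :: "('a::order \<Rightarrow> real) \<Rightarrow> bool" where
  "upper_valuation v \<longleftrightarrow> isotone v \<and>
     (\<forall>x y. \<exists>z. (x::'a) \<le> z \<and> y \<le> z) \<and>
     (\<forall>x y. fminus v x y + fplus v x y \<le> ereal (v x) + ereal (v y))"

end

theory Submission
  imports Defs
begin

lemma cnt_anti:
  fixes K :: "('a::{semilattice_sup, finite}) set"
  assumes "x \<le> y"
  shows "card {k \<in> K. y \<le> k} \<le> card {k \<in> K. x \<le> k}"
  by (rule card_mono) (auto intro: order_trans assms)

lemma cnt_ineq:
  fixes K :: "('a::{semilattice_sup, finite}) set"
  assumes "z \<le> x" "z \<le> y"
  shows "card {k \<in> K. x \<le> k} + card {k \<in> K. y \<le> k}
         \<le> card {k \<in> K. z \<le> k} + card {k \<in> K. sup x y \<le> k}"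
proof -
  let ?S = "{k \<in> K. x \<le> k}" and ?T = "{k \<in> K. y \<le> k}"
  have "card ?S + card ?T = card (?S \<union> ?T) + card (?S \<inter> ?T)"
    by (rule card_Un_Int) auto
  moreover have "?S \<inter> ?T = {k \<in> K. sup x y \<le> k}" by auto
  moreover have "card (?S \<union> ?T) \<le> card {k \<in> K. z \<le> k}"
    by (rule card_mono) (auto intro: order_trans assms)
  ultimately show ?thesis by simp
qed

theorem mainTheorem6:
  fixes K :: "('a::{semilattice_sup, finite}) set" and A :: real
  shows "isotone (\<lambda>x. A - real (card {k \<in> K. x \<le> k})) \<and>
         upper_valuation (\<lambda>x. A - real (card {k \<in> K. x \<le> k}))"
proof -
  define v where "v = (\<lambda>x::'a. A - real (card {k \<in> K. x \<le> k}))"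
  have iso: "isotone v"
    unfolding isotone_def v_def using cnt_anti by fastforce
  have ub: "\<forall>x y. \<exists>z. (x::'a) \<le> z \<and> y \<le> z" by (meson sup_ge1 sup_ge2)
  have main: "fminus v x y + fplus v x y \<le> ereal (v x) + ereal (v y)" for x y
  proof -
    let ?s = "sup x y"
    have p: "fplus v x y \<le> ereal (v ?s)"
      unfolding fplus_def by (rule Inf_lower) auto
    have m: "fminus v x y \<le> ereal (v x + v y - v ?s)"
      unfolding fminus_def
    proof (rule Sup_least)
      fix t assume "t \<in> (\<lambda>z. ereal (v z)) ` {z. z \<le> x \<and> z \<le> y}"
      then obtain z where z: "z \<le> x" "z \<le> y" "t = ereal (v z)" by auto
      have "v z \<le> v x + v y - v ?s"
        using cnt_ineq[OF z(1,2), of K] unfolding v_def by simp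
      thus "t \<le> ereal (v x + v y - v ?s)" using z by simp
    qed
    have "fminus v x y + fplus v x y \<le> ereal (v x + v y - v ?s) + ereal (v ?s)"
      by (rule add_mono[OF m p])
    thus ?thesis by simp
  qed
  show ?thesis
    using iso ub main unfolding upper_valuation_def v_def by blast
qed

end
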